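(* Let $\Gamma$ be a weighted digraph with vertex set $\{1,\dots,n\}$, $n>1$, without loops and with strictly positive arc weights, with Laplacian matrix $L$, matrices of in-forests $Q_k$ and in-forest weights $\sigma_k$. For every $m=0,1,2,\dots$, $$(-L)^m=\sum_{k=0}^{m}\alpha_kQ_{m-k},$$ where $\alpha_0=1$ and, for $k\ge1$, $$\alpha_k=\sum_{(p_1,\dots,p_k):\ \sum_{i=1}^k ip_i=k}(-1)^{\sum_{i=1}^k p_i}\frac{\big(\sum_{i=1}^k p_i\big)!}{\prod_{i=1}^k p_i!}\prod_{i=1}^k\sigma_i^{p_i},$$ the outer sum ranging over all $k$-tuples of nonnegative integers $(p_1,\dots,p_k)$ with $\sum_{i=1}^k ip_i=k$.
   Context: $W=(w_{ij})$ is the matrix of arc weights ($w_{ij}>0$ iff there is an arc $i\to j$, else $0$). The Laplacian $L=(\ell_{ij})$: $\ell_{ij}=-w_{ij}$ for $j\ne i$, $\ell_{ii}=\sum_{k\ne i}w_{ik}$. The weight of a subgraph is the product of its arc weights (1 if no arcs); the weight of a set of subgraphs is the sum of their weights (0 for the empty set). A converging tree is a weakly connected digraph with one vertex (the root) of outdegree 0 and all others of outdegree 1; an in-forest is a spanning subgraph of $\Gamma$ whose weak components are converging trees. $\sigma_k$ is the total weight of in-forests of $\Gamma$ with $k$ arcs ($\sigma_0=1$). $Q_k=(q^k_{ij})$ where $q^k_{ij}$ is the total weight of in-forests with $k$ arcs in which $i$ lies in a tree rooted at $j$ ($Q_0=I$). *)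

theory Defs
  imports "HOL-Analysis.Analysis"
begin

text \<open>Vertices of the digraph are the elements of a finite type 'n (so n = CARD('n)).
  Arc weights are given by w; there is an arc i -> j iff w i j > 0.\<close>

definition arcs :: "('n \<Rightarrow> 'n \<Rightarrow> real) \<Rightarrow> ('n \<times> 'n) set" where
  "arcs w = {(i, j). w i j > 0}"

definition outdeg :: "('n \<times> 'n) set \<Rightarrow> 'n \<Rightarrow> nat" where
  "outdeg E v = card {u. (v, u) \<in> E}"

definition converging_tree :: "'n set \<Rightarrow> ('n \<times> 'n) set \<Rightarrow> bool" where
  "converging_tree V E \<longleftrightarrow> E \<subseteq> V \<times> V \<and>
     (\<forall>x\<in>V. \<forall>y\<in>V. (x, y) \<in> (E \<union> E\<inverse>)\<^sup>*) \<and>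
     (\<exists>r\<in>V. outdeg E r = 0 \<and> (\<forall>v\<in>V - {r}. outdeg E v = 1))"

definition weak_comp :: "('n \<times> 'n) set \<Rightarrow> 'n \<Rightarrow> 'n set" where
  "weak_comp F i = {j. (i, j) \<in> (F \<union> F\<inverse>)\<^sup>*}"

definition in_forest :: "('n \<Rightarrow> 'n \<Rightarrow> real) \<Rightarrow> ('n \<times> 'n) set \<Rightarrow> bool" where
  "in_forest w F \<longleftrightarrow> F \<subseteq> arcs w \<and>
     (\<forall>i. converging_tree (weak_comp F i) (F \<inter> (weak_comp F i \<times> weak_comp F i)))"

definition in_tree_rooted_at :: "('n \<times> 'n) set \<Rightarrow> 'n \<Rightarrow> 'n \<Rightarrow> bool" where
  "in_tree_rooted_at F i j \<longleftrightarrow> j \<in> weak_comp F i \<and>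
     outdeg (F \<inter> (weak_comp F i \<times> weak_comp F i)) j = 0"

definition subgraph_weight :: "('n \<Rightarrow> 'n \<Rightarrow> real) \<Rightarrow> ('n \<times> 'n) set \<Rightarrow> real" where
  "subgraph_weight w F = (\<Prod>(i, j)\<in>F. w i j)"

definition in_forests :: "('n::finite \<Rightarrow> 'n \<Rightarrow> real) \<Rightarrow> nat \<Rightarrow> ('n \<times> 'n) set set" where
  "in_forests w k = {F. in_forest w F \<and> card F = k}"

definition sigma :: "('n::finite \<Rightarrow> 'n \<Rightarrow> real) \<Rightarrow> nat \<Rightarrow> real" where
  "sigma w k = (\<Sum>F\<in>in_forests w k. subgraph_weight w F)"

definition Qmat :: "('n::finite \<Rightarrow> 'n \<Rightarrow> real) \<Rightarrow> nat \<Rightarrow> real ^'n ^'n" where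
  "Qmat w k = (\<chi> i j. \<Sum>F\<in>{F\<in>in_forests w k. in_tree_rooted_at F i j}. subgraph_weight w F)"

definition laplacian :: "('n::finite \<Rightarrow> 'n \<Rightarrow> real) \<Rightarrow> real ^'n ^'n" where
  "laplacian w = (\<chi> i j. if i = j then (\<Sum>k\<in>UNIV - {i}. w i k) else - w i j)"

primrec matpow :: "real ^'n ^'n \<Rightarrow> nat \<Rightarrow> real ^'n ^'n" where
  "matpow A 0 = mat 1"
| "matpow A (Suc m) = matpow A m ** A"

text \<open>alpha_k; k-tuples (p_1,...,p_k) are functions extensional on {1..k}.\<close>
definition alpha :: "('n::finite \<Rightarrow> 'n \<Rightarrow> real) \<Rightarrow> nat \<Rightarrow> real" where
  "alpha w k = (if k = 0 then 1 else
     (\<Sum>p\<in>{p. p \<in> extensional {1..k} \<and> (\<Sum>i=1..k. i * p i) = k}.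
        (-1) ^ (\<Sum>i=1..k. p i) * (fact (\<Sum>i=1..k. p i) / (\<Prod>i=1..k. fact (p i)))
        * (\<Prod>i=1..k. sigma w i ^ p i)))"

end

theory Submission
  imports Defs
begin

definition func :: "('n \<times> 'n) set \<Rightarrow> bool" where
  "func F \<longleftrightarrow> (\<forall>v u u'. (v,u)\<in>F \<longrightarrow> (v,u')\<in>F \<longrightarrow> u = u')"

definition sink :: "('n \<times> 'n) set \<Rightarrow> 'n \<Rightarrow> bool" where
  "sink F r \<longleftrightarrow> (\<forall>u. (r,u)\<notin>F)"

definition forest :: "('n \<times> 'n) set \<Rightarrow> bool" where
  "forest F \<longleftrightarrow> func F \<and> acyclic F"

lemma closure_to_sink:
  assumes "func F" "sink F r" "(x,r) \<in> (F \<union> F\<inverse>)\<^sup>*"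
  shows "(x,r) \<in> F\<^sup>*"
  using assms(3)
proof (induction rule: converse_rtrancl_induct)
  case base then show ?case by simp
next
  case (step y z)
  show ?case
  proof (cases "(y,z) \<in> F")
    case True then show ?thesis using step.IH by (meson converse_rtrancl_into_rtrancl)
  next
    case False
    then have yz: "(z,y) \<in> F" using step.hyps(1) by auto
    from step.IH show ?thesis
    proof (cases rule: converse_rtranclE)
      case base then show ?thesis using yz assms(2) by (auto simp: sink_def)
    next
      case (step z')
      then have "z' = y" using yz assms(1) unfolding func_def by blast
      then show ?thesis using step by simp
    qed
  qed
qed

lemma cycle_propagates:
  assumes "func F" "(c,c) \<in> F\<^sup>+" "(c,x) \<in> F\<^sup>*"
  shows "(x,x) \<in> F\<^sup>+"
  using assms(3)
proof (induction rule: rtrancl_induct)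
  case base then show ?case using assms(2) by simp
next
  case (step y z)
  from tranclD[OF step.IH] obtain y' where "(y,y')\<in>F" "(y',y)\<in>F\<^sup>*" by blast
  moreover then have "y' = z" using step.hyps(2) assms(1) unfolding func_def by blast
  ultimately show ?case using step.hyps(2) by (meson rtrancl_into_trancl1)
qed

lemma sym_rtrancl: "(a,b) \<in> (R \<union> R\<inverse>)\<^sup>* \<Longrightarrow> (b,a) \<in> (R \<union> R\<inverse>)\<^sup>*"
proof -
  assume "(a,b) \<in> (R \<union> R\<inverse>)\<^sup>*"
  then have "(b,a) \<in> ((R \<union> R\<inverse>)\<inverse>)\<^sup>*" by (rule rtrancl_converseI)
  moreover have "(R \<union> R\<inverse>)\<inverse> = R \<union> R\<inverse>" by auto
  ultimately show ?thesis by (simp only:)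
qed

lemma rtrancl_sub_sym: "(a,b) \<in> F\<^sup>* \<Longrightarrow> (a,b) \<in> (F \<union> F\<inverse>)\<^sup>*"
  using rtrancl_mono[of F "F \<union> F\<inverse>"] by blast

lemma sinks_eq:
  assumes "func F" "(x,a) \<in> F\<^sup>*" "sink F a" "(x,b) \<in> F\<^sup>*" "sink F b"
  shows "a = b"
proof -
  have "(b,x) \<in> (F \<union> F\<inverse>)\<^sup>*" by (rule sym_rtrancl[OF rtrancl_sub_sym[OF assms(4)]])
  moreover have "(x,a) \<in> (F \<union> F\<inverse>)\<^sup>*" by (rule rtrancl_sub_sym[OF assms(2)])
  ultimately have "(b,a) \<in> (F \<union> F\<inverse>)\<^sup>*" by (rule rtrancl_trans)
  then have "(b,a) \<in> F\<^sup>*" by (rule closure_to_sink[OF assms(1,3)])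
  then show ?thesis
  proof (cases rule: converse_rtranclE)
    case base then show ?thesis by simp
  next
    case (step c) then show ?thesis using assms(5) by (simp add: sink_def)
  qed
qed

definition froot :: "('n \<times> 'n) set \<Rightarrow> 'n \<Rightarrow> 'n" where
  "froot F x = (THE r. (x,r)\<in>F\<^sup>* \<and> sink F r)"

lemma exists_sink:
  fixes F :: "('n::finite \<times> 'n) set"
  assumes "acyclic F" shows "\<exists>r. (x,r)\<in>F\<^sup>* \<and> sink F r"
proof -
  have "wf (F\<inverse>)" using finite_acyclic_wf_converse[of F] assms by simp
  then show ?thesis
  proof (induction x rule: wf_induct_rule)
    case (less x)
    show ?case
    proof (cases "sink F x")
      case True then show ?thesis by blast
    next
      case False then obtain y where y: "(x,y)\<in>F" by (auto simp: sink_def)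
      with less obtain r where "(y,r)\<in>F\<^sup>*" "sink F r" by blast
      then show ?thesis using y by (meson converse_rtrancl_into_rtrancl)
    qed
  qed
qed

lemma root_iff:
  fixes F :: "('n::finite \<times> 'n) set"
  assumes "forest F"
  shows "froot F x = r \<longleftrightarrow> (x,r)\<in>F\<^sup>* \<and> sink F r"
proof -
  obtain r0 where r0: "(x,r0)\<in>F\<^sup>*" "sink F r0" using exists_sink assms forest_def by blast
  have fu: "func F" using assms forest_def by blast
  have "froot F x = r0" unfolding froot_def
    by (rule the_equality) (use r0 sinks_eq[OF fu] in blast)+
  then show ?thesis using r0 sinks_eq[OF fu] by blast
qed

lemma root_props:
  fixes F :: "('n::finite \<times> 'n) set"
  assumes "forest F"
  shows "(x, froot F x)\<in>F\<^sup>*" "sink F (froot F x)"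
  using root_iff[OF assms] by blast+

lemma outdeg_sink: "outdeg F v = 0 \<longleftrightarrow> sink (F::('n::finite\<times>'n) set) v"
  unfolding outdeg_def sink_def by simp

lemma outdeg_le1: "func F \<Longrightarrow> outdeg (F::('n::finite\<times>'n) set) v \<le> 1"
  unfolding outdeg_def func_def by (simp add: card_le_Suc0_iff_eq)

lemma outdeg_le1_func: "(\<forall>v. outdeg (F::('n::finite\<times>'n) set) v \<le> 1) \<Longrightarrow> func F"
  unfolding outdeg_def func_def by (simp add: card_le_Suc0_iff_eq)

lemma wc_self: "i \<in> weak_comp F i" by (simp add: weak_comp_def)

lemma wc_closed1: "x \<in> weak_comp F i \<Longrightarrow> (x,y)\<in>F \<Longrightarrow> y \<in> weak_comp F i"
  unfolding weak_comp_def
proof -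
  assume "x \<in> {j. (i, j) \<in> (F \<union> F\<inverse>)\<^sup>*}" "(x,y)\<in>F"
  then have "(i,x) \<in> (F \<union> F\<inverse>)\<^sup>*" "(x,y) \<in> F \<union> F\<inverse>" by auto
  then have "(i,y) \<in> (F \<union> F\<inverse>)\<^sup>*" by (rule rtrancl_into_rtrancl)
  then show "y \<in> {j. (i, j) \<in> (F \<union> F\<inverse>)\<^sup>*}" by simp
qed

lemma outdeg_restrict: "x \<in> weak_comp F i \<Longrightarrow>
   outdeg (F \<inter> (weak_comp F i \<times> weak_comp F i)) x = outdeg F x"
proof -
  assume "x \<in> weak_comp F i"
  then have "{u. (x,u) \<in> F \<inter> (weak_comp F i \<times> weak_comp F i)} = {u. (x,u)\<in>F}"
    using wc_closed1[of x F i] by auto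
  then show ?thesis unfolding outdeg_def by simp
qed

lemma wc_conn:
  assumes "x \<in> weak_comp F i"
  shows "(i,x) \<in> ((F \<inter> (weak_comp F i \<times> weak_comp F i)) \<union> (F \<inter> (weak_comp F i \<times> weak_comp F i))\<inverse>)\<^sup>*"
proof -
  have "(i,x) \<in> (F \<union> F\<inverse>)\<^sup>*" using assms by (simp add: weak_comp_def)
  then show ?thesis
  proof (induction rule: rtrancl_induct)
    case base then show ?case by simp
  next
    case (step y z)
    then have "(i,z) \<in> (F \<union> F\<inverse>)\<^sup>*" by (meson rtrancl_into_rtrancl)
    then have "y \<in> weak_comp F i" "z \<in> weak_comp F i" unfolding weak_comp_def
      using step.hyps(1) by auto
    then have "(y,z) \<in> (F \<inter> (weak_comp F i \<times> weak_comp F i)) \<union> (F \<inter> (weak_comp F i \<times> weak_comp F i))\<inverse>"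
      using step.hyps(2) by auto
    then show ?case using step.IH by (meson rtrancl_into_rtrancl)
  qed
qed

lemma in_forest_iff:
  fixes F :: "('n::finite \<times> 'n) set"
  shows "in_forest w F \<longleftrightarrow> F \<subseteq> arcs w \<and> forest F"
proof
  assume A: "in_forest w F"
  have fu: "func F"
  proof (rule outdeg_le1_func, rule allI)
    fix v
    have "converging_tree (weak_comp F v) (F \<inter> (weak_comp F v \<times> weak_comp F v))"
      using A unfolding in_forest_def by blast
    then obtain r where "r \<in> weak_comp F v" "outdeg (F \<inter> (weak_comp F v \<times> weak_comp F v)) r = 0"
       "\<forall>u\<in>weak_comp F v - {r}. outdeg (F \<inter> (weak_comp F v \<times> weak_comp F v)) u = 1"
      unfolding converging_tree_def by blast
    then have "outdeg (F \<inter> (weak_comp F v \<times> weak_comp F v)) v \<le> 1" using wc_self[of v F]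
      by (cases "v = r") auto
    moreover have "outdeg (F \<inter> (weak_comp F v \<times> weak_comp F v)) v = outdeg F v"
      by (rule outdeg_restrict[OF wc_self])
    ultimately show "outdeg F v \<le> 1" by simp
  qed
  have ac: "acyclic F"
    unfolding acyclic_def
  proof (intro allI notI)
    fix c assume cc: "(c,c) \<in> F\<^sup>+"
    have "converging_tree (weak_comp F c) (F \<inter> (weak_comp F c \<times> weak_comp F c))"
      using A unfolding in_forest_def by blast
    then have call: "\<forall>x\<in>weak_comp F c. \<forall>y\<in>weak_comp F c. (x, y) \<in> ((F \<inter> (weak_comp F c \<times> weak_comp F c)) \<union> (F \<inter> (weak_comp F c \<times> weak_comp F c))\<inverse>)\<^sup>*"
      and "\<exists>r\<in>weak_comp F c. outdeg (F \<inter> (weak_comp F c \<times> weak_comp F c)) r = 0"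
      unfolding converging_tree_def by auto
    then obtain r where r: "r \<in> weak_comp F c" "outdeg (F \<inter> (weak_comp F c \<times> weak_comp F c)) r = 0"
      by blast
    have conn: "(c,r) \<in> ((F \<inter> (weak_comp F c \<times> weak_comp F c)) \<union> (F \<inter> (weak_comp F c \<times> weak_comp F c))\<inverse>)\<^sup>*"
      using call wc_self[of c F] r(1) by blast
    have sr: "sink F r" using r outdeg_restrict[of r F c] outdeg_sink[of F r] by simp
    have "(c,r) \<in> (F \<union> F\<inverse>)\<^sup>*"
      by (rule rtrancl_mono[THEN subsetD, OF _ conn]) auto
    then have "(c,r) \<in> F\<^sup>*" by (rule closure_to_sink[OF fu sr])
    then have "(r,r) \<in> F\<^sup>+" by (rule cycle_propagates[OF fu cc])
    then obtain z where "(r,z) \<in> F" using tranclD[of r r F] by blast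
    then show False using sr by (simp add: sink_def)
  qed
  show "F \<subseteq> arcs w \<and> forest F" using A fu ac by (simp add: in_forest_def forest_def)
next
  assume B: "F \<subseteq> arcs w \<and> forest F"
  then have fu: "func F" and ac: "acyclic F" by (auto simp: forest_def)
  have "converging_tree (weak_comp F i) (F \<inter> (weak_comp F i \<times> weak_comp F i))" for i
  proof -
    let ?C = "weak_comp F i" let ?E = "F \<inter> (weak_comp F i \<times> weak_comp F i)"
    have c1: "\<forall>x\<in>?C. \<forall>y\<in>?C. (x, y) \<in> (?E \<union> ?E\<inverse>)\<^sup>*"
    proof (intro ballI)
      fix x y assume "x \<in> ?C" "y \<in> ?C"
      then have "(x,i) \<in> (?E \<union> ?E\<inverse>)\<^sup>*" "(i,y) \<in> (?E \<union> ?E\<inverse>)\<^sup>*"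
        using sym_rtrancl[OF wc_conn[of x]] wc_conn[of y] by auto
      then show "(x, y) \<in> (?E \<union> ?E\<inverse>)\<^sup>*" by (rule rtrancl_trans)
    qed
    obtain r where r: "(i,r)\<in>F\<^sup>*" "sink F r" using exists_sink ac by blast
    have rC: "r \<in> ?C" using rtrancl_sub_sym[OF r(1)] by (simp add: weak_comp_def)
    have "outdeg ?E r = 0" using outdeg_restrict[OF rC] outdeg_sink[of F r] r(2) by simp
    moreover have "outdeg ?E v = 1" if v: "v \<in> ?C - {r}" for v
    proof -
      have vC: "v \<in> ?C" using v by blast
      have "\<not> sink F v"
      proof
        assume sv: "sink F v"
        have "(r,i) \<in> (F \<union> F\<inverse>)\<^sup>*" "(i,v) \<in> (F \<union> F\<inverse>)\<^sup>*"
          using sym_rtrancl[of i r F] rC vC unfolding weak_comp_def by auto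
        then have "(r,v) \<in> (F \<union> F\<inverse>)\<^sup>*" by (rule rtrancl_trans)
        then have "(r,v) \<in> F\<^sup>*" by (rule closure_to_sink[OF fu sv])
        then show False
        proof (cases rule: converse_rtranclE)
          case base then show ?thesis using v by simp
        next
          case (step c) then show ?thesis using r(2) by (simp add: sink_def)
        qed
      qed
      then have "outdeg F v \<noteq> 0" using outdeg_sink[of F v] by simp
      moreover have "outdeg F v \<le> 1" using outdeg_le1[OF fu] by blast
      ultimately show ?thesis using outdeg_restrict[OF vC] by simp
    qed
    ultimately show ?thesis unfolding converging_tree_def using c1 rC by blast
  qed
  then show "in_forest w F" using B by (simp add: in_forest_def)
qed

lemma in_tree_iff:
  fixes F :: "('n::finite \<times> 'n) set"
  assumes "forest F"
  shows "in_tree_rooted_at F i j \<longleftrightarrow> froot F i = j"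
proof -
  have fu: "func F" using assms forest_def by blast
  have "in_tree_rooted_at F i j \<longleftrightarrow> (i,j)\<in>F\<^sup>* \<and> sink F j"
  proof
    assume "in_tree_rooted_at F i j"
    then have "j \<in> weak_comp F i" "outdeg F j = 0"
      unfolding in_tree_rooted_at_def using outdeg_restrict[of j F i] by auto
    then show "(i,j)\<in>F\<^sup>* \<and> sink F j" using closure_to_sink[OF fu, of j i] outdeg_sink[of F j]
      unfolding weak_comp_def by blast
  next
    assume a: "(i,j)\<in>F\<^sup>* \<and> sink F j"
      then have jC: "j \<in> weak_comp F i" using rtrancl_sub_sym[of i j F] unfolding weak_comp_def by auto
      then show "in_tree_rooted_at F i j" using outdeg_restrict[OF jC] outdeg_sink[of F j] a
        unfolding in_tree_rooted_at_def by simp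
  qed
  then show ?thesis using root_iff[OF assms] by simp
qed


lemma root_eq_sink_iff:
  fixes F :: "('n::finite \<times> 'n) set"
  assumes f: "forest F" and s: "sink F i"
  shows "froot F x = i \<longleftrightarrow> (x,i)\<in>F\<^sup>*"
  using root_iff[OF f, of x i] s by simp

lemma root_sink_self:
  fixes F :: "('n::finite \<times> 'n) set"
  assumes f: "forest F" and s: "sink F i"
  shows "froot F i = i"
  using root_eq_sink_iff[OF f s, of i] by simp

lemma ins_forest:
  fixes F0 :: "('n::finite \<times> 'n) set"
  assumes f: "forest F0" and s: "sink F0 i" and r: "froot F0 l \<noteq> i"
  shows "forest (insert (i,l) F0)"
    and "froot (insert (i,l) F0) x = (if froot F0 x = i then froot F0 l else froot F0 x)"
proof -
  have nl: "(l,i) \<notin> F0\<^sup>*" using root_eq_sink_iff[OF f s, of l] r by simp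
  have fu: "func F0" and ac: "acyclic F0" using f forest_def by auto
  have fu': "func (insert (i,l) F0)" using fu s unfolding func_def sink_def by blast
  have ac': "acyclic (insert (i,l) F0)" using ac nl by (simp add: acyclic_insert)
  show fG: "forest (insert (i,l) F0)" using fu' ac' forest_def by blast
  have sub: "F0\<^sup>* \<subseteq> (insert (i,l) F0)\<^sup>*" by (rule rtrancl_mono) blast
  have sl: "sink (insert (i,l) F0) (froot F0 l)" using root_props(2)[OF f, of l] r unfolding sink_def by auto
  show "froot (insert (i,l) F0) x = (if froot F0 x = i then froot F0 l else froot F0 x)"
  proof (cases "froot F0 x = i")
    case True
    have "(x,i) \<in> (insert (i,l) F0)\<^sup>*" using root_props(1)[OF f, of x] True sub by auto
    moreover have "(i,l) \<in> insert (i,l) F0" by simp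
    ultimately have "(x,l) \<in> (insert (i,l) F0)\<^sup>*" by (rule rtrancl_into_rtrancl)
    moreover have "(l, froot F0 l) \<in> (insert (i,l) F0)\<^sup>*" using root_props(1)[OF f, of l] sub by auto
    ultimately have "(x, froot F0 l) \<in> (insert (i,l) F0)\<^sup>*" by (rule rtrancl_trans)
    then show ?thesis using root_iff[OF fG, of x "froot F0 l"] True sl by simp
  next
    case False
    have "(x, froot F0 x) \<in> (insert (i,l) F0)\<^sup>*" using root_props(1)[OF f, of x] sub by auto
    moreover have "sink (insert (i,l) F0) (froot F0 x)"
      using root_props(2)[OF f, of x] False unfolding sink_def by auto
    ultimately show ?thesis using root_iff[OF fG, of x "froot F0 x"] False by simp
  qed
qed

lemma del_forest:
  fixes G :: "('n::finite \<times> 'n) set"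
  assumes g: "forest G" and e: "(i,u) \<in> G"
  shows "forest (G - {(i,u)})" "sink (G - {(i,u)}) i" "froot (G - {(i,u)}) u \<noteq> i"
    "G = insert (i,u) (G - {(i,u)})"
proof -
  have fu: "func G" and ac: "acyclic G" using g forest_def by auto
  have fu0: "func (G - {(i,u)})" using fu unfolding func_def by blast
  have ac0: "acyclic (G - {(i,u)})" by (rule acyclic_subset[OF ac]) blast
  show f0: "forest (G - {(i,u)})" using fu0 ac0 forest_def by blast
  show s0: "sink (G - {(i,u)}) i" using fu e unfolding func_def sink_def by blast
  show "froot (G - {(i,u)}) u \<noteq> i"
  proof
    assume "froot (G - {(i,u)}) u = i"
    then have "(u,i) \<in> (G - {(i,u)})\<^sup>*" using root_eq_sink_iff[OF f0 s0, of u] by simp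
    moreover have "(G - {(i,u)})\<^sup>* \<subseteq> G\<^sup>*" by (rule rtrancl_mono) blast
    ultimately have "(u,i) \<in> G\<^sup>*" by blast
    then have "(i,i) \<in> G\<^sup>+" using e by (rule rtrancl_into_trancl2[rotated])
    then show False using ac unfolding acyclic_def by blast
  qed
  show "G = insert (i,u) (G - {(i,u)})" using e by blast
qed

definition succ :: "('n \<times> 'n) set \<Rightarrow> 'n \<Rightarrow> 'n" where
  "succ G i = (THE u. (i,u)\<in>G)"

lemma succ_eq: "func G \<Longrightarrow> (i,u)\<in>G \<Longrightarrow> succ G i = u"
  unfolding succ_def func_def by (rule the_equality) blast+

lemma succ_in: "func G \<Longrightarrow> \<not> sink G i \<Longrightarrow> (i, succ G i) \<in> G"
proof -
  assume "func G" "\<not> sink G i"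
  then obtain u where "(i,u)\<in>G" unfolding sink_def by blast
  then show ?thesis using succ_eq[OF \<open>func G\<close>] by simp
qed

definition Fk :: "('n::finite \<Rightarrow> 'n \<Rightarrow> real) \<Rightarrow> nat \<Rightarrow> ('n \<times> 'n) set set" where
  "Fk w k = {F. F \<subseteq> arcs w \<and> forest F \<and> card F = k}"

lemma sw_insert:
  fixes F :: "('n::finite \<times> 'n) set"
  shows "(a,b) \<notin> F \<Longrightarrow> subgraph_weight w (insert (a,b) F) = w a b * subgraph_weight w F"
  unfolding subgraph_weight_def by simp

lemma swap_lemma:
  fixes F :: "('n::finite \<times> 'n) set"
  assumes F: "F \<in> Fk w k" and wl: "w i l > 0" and ns: "\<not> sink F i" and rr: "froot F l \<noteq> froot F i"
  defines "i' \<equiv> succ F i"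
  defines "F' \<equiv> insert (i,l) (F - {(i, i')})"
  shows "F' \<in> Fk w k" "w i i' > 0" "\<not> sink F' i" "froot F' i' \<noteq> froot F' i" "succ F' i = l"
    "insert (i,i') (F' - {(i,l)}) = F" "froot F' i = froot F l" "froot F' i' = froot F i"
    "subgraph_weight w F' * w i i' = subgraph_weight w F * w i l"
proof -
  have fF: "forest F" and sa: "F \<subseteq> arcs w" and cF: "card F = k" using F Fk_def by auto
  have fu: "func F" using fF forest_def by blast
  have e: "(i,i') \<in> F" unfolding i'_def by (rule succ_in[OF fu ns])
  define F0 where "F0 = F - {(i,i')}"
  have f0: "forest F0" and s0: "sink F0 i" and r0: "froot F0 i' \<noteq> i" and FF: "F = insert (i,i') F0"
    using del_forest[OF fF e] unfolding F0_def by auto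
  have rF: "froot F x = (if froot F0 x = i then froot F0 i' else froot F0 x)" for x
    using ins_forest(2)[OF f0 s0 r0, of x] FF by simp
  have ri: "froot F i = froot F0 i'" using rF[of i] root_sink_self[OF f0 s0] by simp
  have rl0: "froot F0 l \<noteq> i"
  proof
    assume "froot F0 l = i"
    then have "froot F l = froot F0 i'" using rF[of l] by simp
    then show False using rr ri by simp
  qed
  have F'eq: "F' = insert (i,l) F0" unfolding F'_def F0_def by simp
  have fF': "forest F'" using ins_forest(1)[OF f0 s0 rl0] F'eq by simp
  have rF': "froot F' x = (if froot F0 x = i then froot F0 l else froot F0 x)" for x
    using ins_forest(2)[OF f0 s0 rl0, of x] F'eq by simp
  show r1: "froot F' i = froot F l" using rF'[of i] rF[of l] root_sink_self[OF f0 s0] rl0 by simp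
  show r2: "froot F' i' = froot F i" using rF'[of i'] ri r0 by simp
  show "froot F' i' \<noteq> froot F' i" using r1 r2 rr by simp
  show "w i i' > 0" using e sa unfolding arcs_def by auto
  show "\<not> sink F' i" unfolding F'eq sink_def by blast
  have fu': "func F'" using fF' forest_def by blast
  show "succ F' i = l" by (rule succ_eq[OF fu']) (simp add: F'eq)
  have nil: "(i,l) \<notin> F0" using s0 unfolding sink_def by blast
  have nii: "(i,i') \<notin> F0" unfolding F0_def by blast
  show "insert (i,i') (F' - {(i,l)}) = F" using F'eq FF nil by auto
  have cF0: "card F = Suc (card F0)" using FF nii by (simp add: card_insert_disjoint)
  have cF': "card F' = Suc (card F0)" using F'eq nil by (simp add: card_insert_disjoint)
  have sa': "F' \<subseteq> arcs w" using F'eq FF sa wl unfolding arcs_def by auto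
  show "F' \<in> Fk w k" using fF' cF' cF0 cF sa' unfolding Fk_def by simp
  show "subgraph_weight w F' * w i i' = subgraph_weight w F * w i l"
    using sw_insert[OF nil, of w] sw_insert[OF nii, of w] F'eq FF by simp
qed


lemma sum_invol_zero:
  fixes f :: "'a \<Rightarrow> real"
  assumes "finite S" "\<And>x. x\<in>S \<Longrightarrow> g x \<in> S" "\<And>x. x\<in>S \<Longrightarrow> g (g x) = x"
    "\<And>x. x\<in>S \<Longrightarrow> f (g x) = - f x"
  shows "sum f S = 0"
proof -
  have "sum f S = sum (\<lambda>x. f (g x)) S"
    by (rule sum.reindex_bij_witness[of S g g]) (use assms in auto)
  also have "\<dots> = sum (\<lambda>x. - f x) S" using assms(4) by (rule sum.cong[OF refl])
  also have "\<dots> = - sum f S" by (simp add: sum_negf)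
  finally show ?thesis by simp
qed

definition hh :: "('n::finite \<Rightarrow> 'n \<Rightarrow> real) \<Rightarrow> 'n \<Rightarrow> 'n \<Rightarrow> ('n \<times> 'n) set \<times> 'n \<Rightarrow> real" where
  "hh w i j x = w i (snd x) * subgraph_weight w (fst x) *
     (of_bool (froot (fst x) (snd x) = j) - of_bool (froot (fst x) i = j))"

lemma stepA:
  fixes w :: "'n::finite \<Rightarrow> 'n \<Rightarrow> real"
  shows "sum (hh w i j) {x. fst x \<in> Fk w k \<and> w i (snd x) > 0 \<and> \<not> sink (fst x) i} = 0"
proof (rule sum_invol_zero[where g = "\<lambda>x. if froot (fst x) (snd x) \<noteq> froot (fst x) i
      then (insert (i, snd x) (fst x - {(i, succ (fst x) i)}), succ (fst x) i) else x"])
  show "finite {x. fst x \<in> Fk w k \<and> w i (snd x) > 0 \<and> \<not> sink (fst x) i}" by simp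
next
  fix x assume xS: "x \<in> {x. fst x \<in> Fk w k \<and> w i (snd x) > 0 \<and> \<not> sink (fst x) i}"
  obtain F l where x: "x = (F,l)" by (cases x)
  have F: "F \<in> Fk w k" "w i l > 0" "\<not> sink F i" using xS x by auto
  show "(if froot (fst x) (snd x) \<noteq> froot (fst x) i
      then (insert (i, snd x) (fst x - {(i, succ (fst x) i)}), succ (fst x) i) else x)
     \<in> {x. fst x \<in> Fk w k \<and> w i (snd x) > 0 \<and> \<not> sink (fst x) i}"
  proof (cases "froot F l \<noteq> froot F i")
    case True
    note sw = swap_lemma[OF F True]
    show ?thesis using x True sw(1,2,3) by simp
  next
    case False then show ?thesis using x xS by simp
  qed
next
  fix x assume xS: "x \<in> {x. fst x \<in> Fk w k \<and> w i (snd x) > 0 \<and> \<not> sink (fst x) i}"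
  obtain F l where x: "x = (F,l)" by (cases x)
  have F: "F \<in> Fk w k" "w i l > 0" "\<not> sink F i" using xS x by auto
  let ?g = "\<lambda>x. if froot (fst x) (snd x) \<noteq> froot (fst x) i
      then (insert (i, snd x) (fst x - {(i, succ (fst x) i)}), succ (fst x) i) else x"
  show "?g (?g x) = x"
  proof (cases "froot F l \<noteq> froot F i")
    case True
    note sw = swap_lemma[OF F True]
    show ?thesis using x True sw(4,5,6) by simp
  next
    case False then show ?thesis using x by simp
  qed
next
  fix x assume xS: "x \<in> {x. fst x \<in> Fk w k \<and> w i (snd x) > 0 \<and> \<not> sink (fst x) i}"
  obtain F l where x: "x = (F,l)" by (cases x)
  have F: "F \<in> Fk w k" "w i l > 0" "\<not> sink F i" using xS x by auto
  let ?g = "\<lambda>x. if froot (fst x) (snd x) \<noteq> froot (fst x) i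
      then (insert (i, snd x) (fst x - {(i, succ (fst x) i)}), succ (fst x) i) else x"
  show "hh w i j (?g x) = - hh w i j x"
  proof (cases "froot F l \<noteq> froot F i")
    case True
    note sw = swap_lemma[OF F True]
    define F' where "F' = insert (i, l) (F - {(i, succ F i)})"
    define i' where "i' = succ F i"
    have gx: "?g x = (F', i')" using x True unfolding F'_def i'_def by simp
    have r1: "froot F' i = froot F l" and r2: "froot F' i' = froot F i"
      and ww: "subgraph_weight w F' * w i i' = subgraph_weight w F * w i l"
      using sw(7,8,9) unfolding F'_def i'_def by simp_all
    have "hh w i j (?g x) = (subgraph_weight w F' * w i i') *
        (of_bool (froot F i = j) - of_bool (froot F l = j))"
      unfolding gx hh_def using r1 r2 by simp
    also have "\<dots> = - hh w i j x" unfolding ww x hh_def by (simp add: algebra_simps)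
    finally show ?thesis .
  next
    case False then show ?thesis using x by (simp add: hh_def)
  qed
qed

lemma stepB:
  fixes w :: "'n::finite \<Rightarrow> 'n \<Rightarrow> real"
  shows "sum (hh w i j) {x. fst x \<in> Fk w k \<and> w i (snd x) > 0 \<and> sink (fst x) i}
    = (\<Sum>G\<in>Fk w (Suc k). subgraph_weight w G * (of_bool (froot G i = j) - of_bool (i = j)))"
proof -
  let ?P1 = "{x. fst x \<in> Fk w k \<and> w i (snd x) > 0 \<and> sink (fst x) i}"
  let ?P1' = "{x. fst x \<in> Fk w k \<and> w i (snd x) > 0 \<and> sink (fst x) i \<and> froot (fst x) (snd x) \<noteq> i}"
  let ?Gs = "{G. G \<in> Fk w (Suc k) \<and> \<not> sink G i}"
  let ?H = "\<lambda>G. subgraph_weight w G * (of_bool (froot G i = j) - of_bool (i = j))"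
  have "sum (hh w i j) ?P1 = sum (hh w i j) ?P1'"
  proof (rule sum.mono_neutral_right)
    show "\<forall>x\<in>?P1 - ?P1'. hh w i j x = 0"
    proof
      fix x assume xx: "x \<in> ?P1 - ?P1'"
      then have "forest (fst x)" "sink (fst x) i" "froot (fst x) (snd x) = i" unfolding Fk_def by auto
      then show "hh w i j x = 0" using root_sink_self[of "fst x" i] by (simp add: hh_def)
    qed
  qed auto
  also have "\<dots> = sum ?H ?Gs"
  proof (rule sum.reindex_bij_witness[of _ "\<lambda>G. (G - {(i, succ G i)}, succ G i)" "\<lambda>x. insert (i, snd x) (fst x)"])
    fix a assume a: "a \<in> ?P1'"
    obtain F l where x: "a = (F,l)" by (cases a)
    have F: "forest F" "F \<subseteq> arcs w" "card F = k" "w i l > 0" "sink F i" "froot F l \<noteq> i"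
      using a x unfolding Fk_def by auto
    have fG: "forest (insert (i,l) F)" by (rule ins_forest(1)[OF F(1,5,6)])
    have nil: "(i,l) \<notin> F" using F(5) unfolding sink_def by blast
    have sc: "succ (insert (i,l) F) i = l"
      using succ_eq[of "insert (i,l) F" i l] fG forest_def by blast
    show "(insert (i, snd a) (fst a) - {(i, succ (insert (i, snd a) (fst a)) i)},
          succ (insert (i, snd a) (fst a)) i) = a"
      using x sc nil by auto
    have "insert (i,l) F \<subseteq> arcs w" using F(2,4) unfolding arcs_def by auto
    moreover have "card (insert (i,l) F) = Suc k" using nil F(3) by (simp add: card_insert_disjoint)
    ultimately show "insert (i, snd a) (fst a) \<in> ?Gs" using fG x unfolding Fk_def sink_def by auto
    have rG: "froot (insert (i,l) F) i = froot F l"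
      using ins_forest(2)[OF F(1,5,6), of i] root_sink_self[OF F(1,5)] by simp
    have "?H (insert (i,l) F) = w i l * subgraph_weight w F * (of_bool (froot F l = j) - of_bool (i = j))"
      using rG sw_insert[OF nil, of w] by simp
    then show "?H (insert (i, snd a) (fst a)) = hh w i j a"
      using x root_sink_self[OF F(1,5)] by (simp add: hh_def)
  next
    fix b assume b: "b \<in> ?Gs"
    then have G: "forest b" "b \<subseteq> arcs w" "card b = Suc k" "\<not> sink b i" unfolding Fk_def by auto
    have fu: "func b" using G(1) forest_def by blast
    have e: "(i, succ b i) \<in> b" by (rule succ_in[OF fu G(4)])
    note d = del_forest[OF G(1) e]
    show "insert (i, snd (b - {(i, succ b i)}, succ b i)) (fst (b - {(i, succ b i)}, succ b i)) = b"
      using d(4) by simp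
    have "card (b - {(i, succ b i)}) = k" using G(3) e by simp
    moreover have "w i (succ b i) > 0" using G(2) e unfolding arcs_def by auto
    ultimately show "(b - {(i, succ b i)}, succ b i) \<in> ?P1'"
      using d(1,2,3) G(2) unfolding Fk_def by auto
  qed
  also have "\<dots> = sum ?H (Fk w (Suc k))"
  proof (rule sum.mono_neutral_left)
    show "\<forall>G\<in>Fk w (Suc k) - ?Gs. ?H G = 0"
    proof
      fix G assume "G \<in> Fk w (Suc k) - ?Gs"
      then have "forest G" "sink G i" unfolding Fk_def by auto
      then show "?H G = 0" using root_sink_self[of G i] by simp
    qed
  qed auto
  finally show ?thesis .
qed


lemma key:
  fixes w :: "'n::finite \<Rightarrow> 'n \<Rightarrow> real"
  shows "(\<Sum>F\<in>Fk w k. \<Sum>l\<in>{l. w i l > 0}. hh w i j (F,l))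
    = (\<Sum>G\<in>Fk w (Suc k). subgraph_weight w G * (of_bool (froot G i = j) - of_bool (i = j)))"
proof -
  have "(\<Sum>F\<in>Fk w k. \<Sum>l\<in>{l. w i l > 0}. hh w i j (F,l)) = sum (hh w i j) (Fk w k \<times> {l. w i l > 0})"
    by (simp add: sum.cartesian_product)
  also have "Fk w k \<times> {l. w i l > 0} = {x. fst x \<in> Fk w k \<and> w i (snd x) > 0 \<and> sink (fst x) i}
      \<union> {x. fst x \<in> Fk w k \<and> w i (snd x) > 0 \<and> \<not> sink (fst x) i}" by auto
  also have "sum (hh w i j) \<dots> = sum (hh w i j) {x. fst x \<in> Fk w k \<and> w i (snd x) > 0 \<and> sink (fst x) i}
      + sum (hh w i j) {x. fst x \<in> Fk w k \<and> w i (snd x) > 0 \<and> \<not> sink (fst x) i}"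
    by (rule sum.union_disjoint) auto
  also have "\<dots> = (\<Sum>G\<in>Fk w (Suc k). subgraph_weight w G * (of_bool (froot G i = j) - of_bool (i = j)))"
    using stepA[of w i j k] stepB[of w i j k] by simp
  finally show ?thesis .
qed

definition qv :: "('n::finite \<Rightarrow> 'n \<Rightarrow> real) \<Rightarrow> nat \<Rightarrow> 'n \<Rightarrow> 'n \<Rightarrow> real" where
  "qv w k a b = (\<Sum>F\<in>Fk w k. subgraph_weight w F * of_bool (froot F a = b))"

lemma in_forests_eq: "in_forests w k = Fk w k"
  unfolding in_forests_def Fk_def using in_forest_iff by blast

lemma sigma_eq: "sigma w k = (\<Sum>F\<in>Fk w k. subgraph_weight w F)"
  unfolding sigma_def in_forests_eq ..

lemma Qmat_eq: "Qmat w k $ a $ b = qv w k a b"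
proof -
  have "Qmat w k $ a $ b = (\<Sum>F\<in>{F\<in>Fk w k. in_tree_rooted_at F a b}. subgraph_weight w F)"
    unfolding Qmat_def in_forests_eq by simp
  also have "\<dots> = (\<Sum>F\<in>{F\<in>Fk w k. froot F a = b}. subgraph_weight w F)"
    by (rule sum.cong) (auto simp: Fk_def in_tree_iff)
  also have "\<dots> = qv w k a b" unfolding qv_def
    by (simp add: sum.inter_filter of_bool_def if_distrib cong: if_cong)
  finally show ?thesis .
qed

lemma qv_rec:
  fixes w :: "'n::finite \<Rightarrow> 'n \<Rightarrow> real"
  assumes nn: "\<forall>i j. w i j \<ge> 0"
  shows "qv w (Suc k) i j = (\<Sum>l\<in>UNIV. w i l * qv w k l j) - (\<Sum>l\<in>UNIV. w i l) * qv w k i j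
      + of_bool (i = j) * sigma w (Suc k)"
proof -
  let ?A = "{l. w i l > 0}"
  have z: "w i l = 0" if "l \<notin> ?A" for l
  proof -
    have "w i l \<ge> 0" using nn by blast
    then show ?thesis using that by simp
  qed
  have "(\<Sum>F\<in>Fk w k. \<Sum>l\<in>?A. hh w i j (F,l)) = (\<Sum>l\<in>?A. \<Sum>F\<in>Fk w k. hh w i j (F,l))"
    by (rule sum.swap)
  also have "\<dots> = (\<Sum>l\<in>?A. w i l * qv w k l j - w i l * qv w k i j)"
  proof (rule sum.cong[OF refl])
    fix l
    have "(\<Sum>F\<in>Fk w k. hh w i j (F,l)) = (\<Sum>F\<in>Fk w k. w i l * (subgraph_weight w F * of_bool (froot F l = j))
        - w i l * (subgraph_weight w F * of_bool (froot F i = j)))"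
      by (rule sum.cong[OF refl]) (simp only: hh_def fst_conv snd_conv right_diff_distrib mult.assoc)
    also have "\<dots> = w i l * qv w k l j - w i l * qv w k i j"
      by (simp only: sum_subtractf sum_distrib_left[symmetric] qv_def)
    finally show "(\<Sum>F\<in>Fk w k. hh w i j (F,l)) = w i l * qv w k l j - w i l * qv w k i j" .
  qed
  also have "\<dots> = (\<Sum>l\<in>UNIV. w i l * qv w k l j - w i l * qv w k i j)"
  proof (rule sum.mono_neutral_left)
    show "\<forall>l\<in>UNIV - ?A. w i l * qv w k l j - w i l * qv w k i j = 0"
    proof
      fix l assume "l \<in> UNIV - ?A"
      then have "w i l = 0" by (intro z) blast
      then show "w i l * qv w k l j - w i l * qv w k i j = 0" by simp
    qed
  qed auto
  also have "\<dots> = (\<Sum>l\<in>UNIV. w i l * qv w k l j) - (\<Sum>l\<in>UNIV. w i l) * qv w k i j"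
    by (simp add: sum_subtractf sum_distrib_right)
  finally have L: "(\<Sum>F\<in>Fk w k. \<Sum>l\<in>?A. hh w i j (F,l)) = \<dots>" .
  have "(\<Sum>G\<in>Fk w (Suc k). subgraph_weight w G * (of_bool (froot G i = j) - of_bool (i = j)))
      = qv w (Suc k) i j - of_bool (i = j) * sigma w (Suc k)"
    by (simp add: qv_def sigma_eq algebra_simps sum_subtractf sum_distrib_left sum_distrib_right)
  then show ?thesis using key[where w=w and k=k and i=i and j=j] L by simp
qed

lemma Q_rec:
  fixes w :: "'n::finite \<Rightarrow> 'n \<Rightarrow> real"
  assumes z: "\<forall>i. w i i = 0" and nn: "\<forall>i j. w i j \<ge> 0"
  shows "Qmat w (Suc k) = sigma w (Suc k) *\<^sub>R mat 1 - laplacian w ** Qmat w k"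
proof -
  have "Qmat w (Suc k) $ i $ j = (sigma w (Suc k) *\<^sub>R mat 1 - laplacian w ** Qmat w k) $ i $ j" for i j
  proof -
    let ?d = "\<Sum>l\<in>UNIV. w i l"
    have d: "(\<Sum>l\<in>UNIV - {i}. w i l) = ?d"
      using sum.remove[of UNIV i "w i"] z by simp
    have Lil: "laplacian w $ i $ l = ?d * of_bool (i = l) - w i l" for l
      unfolding laplacian_def using d z by auto
    have "(laplacian w ** Qmat w k) $ i $ j = (\<Sum>l\<in>UNIV. (?d * of_bool (i = l) - w i l) * qv w k l j)"
      unfolding matrix_matrix_mult_def Qmat_eq[symmetric] using Lil by simp
    also have "\<dots> = (\<Sum>l\<in>UNIV. ?d * of_bool (i = l) * qv w k l j) - (\<Sum>l\<in>UNIV. w i l * qv w k l j)"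
      by (simp add: left_diff_distrib sum_subtractf)
    also have "(\<Sum>l\<in>UNIV. ?d * of_bool (i = l) * qv w k l j) = (\<Sum>l\<in>UNIV. if i = l then ?d * qv w k l j else 0)"
      by (rule sum.cong) auto
    also have "\<dots> = ?d * qv w k i j" by (simp add: sum.delta)
    finally have "(laplacian w ** Qmat w k) $ i $ j = ?d * qv w k i j - (\<Sum>l\<in>UNIV. w i l * qv w k l j)" .
    then show ?thesis using qv_rec[OF nn, of k i j] Qmat_eq[of w "Suc k" i j]
      by (simp add: mat_def)
  qed
  then show ?thesis by (simp add: vec_eq_iff)
qed

lemma forest_empty: "forest {}"
  by (simp add: forest_def func_def acyclic_def)

lemma Fk0: "Fk w 0 = {{}}"
proof
  show "Fk w 0 \<subseteq> {{}}"
  proof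
    fix F assume "F \<in> Fk w 0"
    then have "card F = 0" unfolding Fk_def by simp
    moreover have "finite F" by simp
    ultimately show "F \<in> {{}}" by simp
  qed
  show "{{}} \<subseteq> Fk w 0" unfolding Fk_def using forest_empty by simp
qed

lemma root_empty: "froot {} a = b \<longleftrightarrow> a = (b::'a::finite)"
  using root_iff[OF forest_empty, of a b] by (simp add: sink_def)

lemma Q0: "Qmat w 0 = mat 1"
  by (simp add: vec_eq_iff Qmat_eq qv_def mat_def subgraph_weight_def Fk0 root_empty)

lemma sigma0: "sigma w 0 = 1"
  by (simp add: sigma_eq subgraph_weight_def Fk0)


definition PP :: "nat \<Rightarrow> nat \<Rightarrow> (nat \<Rightarrow> nat) set" where
  "PP K r = {p. p \<in> extensional {1..K} \<and> (\<Sum>i=1..K. i * p i) = r}"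

definition TT :: "(nat \<Rightarrow> real) \<Rightarrow> nat \<Rightarrow> (nat \<Rightarrow> nat) \<Rightarrow> real" where
  "TT s K p = (-1) ^ (\<Sum>i=1..K. p i) * (fact (\<Sum>i=1..K. p i) / (\<Prod>i=1..K. fact (p i)))
        * (\<Prod>i=1..K. s i ^ p i)"

definition BB :: "(nat \<Rightarrow> real) \<Rightarrow> nat \<Rightarrow> nat \<Rightarrow> real" where
  "BB s K r = sum (TT s K) (PP K r)"

lemma alpha_BB: "alpha w k = BB (sigma w) k k"
proof (cases "k = 0")
  case True
  have "PP 0 0 = {\<lambda>_. undefined}" unfolding PP_def by (auto simp: extensional_def)
  then show ?thesis using True by (simp add: alpha_def BB_def TT_def)
next
  case False then show ?thesis by (simp add: alpha_def BB_def TT_def PP_def)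
qed

lemma finite_PP: "finite (PP K r)"
proof (rule finite_subset)
  show "PP K r \<subseteq> PiE {1..K} (\<lambda>_. {0..r})"
  proof
    fix p assume p: "p \<in> PP K r"
    have "p i \<le> r" if "i \<in> {1..K}" for i
    proof -
      have "i * p i \<le> (\<Sum>i=1..K. i * p i)"
        by (rule member_le_sum) (use that in auto)
      moreover have "1 * p i \<le> i * p i" using that by (intro mult_le_mono1) simp
      moreover have "(\<Sum>i=1..K. i * p i) = r" using p unfolding PP_def by simp
      ultimately show ?thesis by linarith
    qed
    then show "p \<in> PiE {1..K} (\<lambda>_. {0..r})" using p unfolding PP_def PiE_def Pi_def by auto
  qed
  show "finite (PiE {1..K} (\<lambda>_. {0..r}))" by (rule finite_PiE) auto
qed

lemma sum_upd:
  fixes h :: "nat \<Rightarrow> nat \<Rightarrow> 'b::comm_monoid_add"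
  assumes "finite A" "i \<in> A"
  shows "(\<Sum>m\<in>A. h m ((p(i:=v)) m)) = h i v + (\<Sum>m\<in>A-{i}. h m (p m))"
proof -
  have "(\<Sum>m\<in>A. h m ((p(i:=v)) m)) = h i v + (\<Sum>m\<in>A-{i}. h m ((p(i:=v)) m))"
    using sum.remove[OF assms, of "\<lambda>m. h m ((p(i:=v)) m)"] by simp
  moreover have "(\<Sum>m\<in>A-{i}. h m ((p(i:=v)) m)) = (\<Sum>m\<in>A-{i}. h m (p m))"
    by (rule sum.cong) auto
  ultimately show ?thesis by simp
qed

lemma prod_upd:
  fixes h :: "nat \<Rightarrow> nat \<Rightarrow> 'b::comm_monoid_mult"
  assumes "finite A" "i \<in> A"
  shows "(\<Prod>m\<in>A. h m ((p(i:=v)) m)) = h i v * (\<Prod>m\<in>A-{i}. h m (p m))"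
proof -
  have "(\<Prod>m\<in>A. h m ((p(i:=v)) m)) = h i v * (\<Prod>m\<in>A-{i}. h m ((p(i:=v)) m))"
    using prod.remove[OF assms, of "\<lambda>m. h m ((p(i:=v)) m)"] by simp
  moreover have "(\<Prod>m\<in>A-{i}. h m ((p(i:=v)) m)) = (\<Prod>m\<in>A-{i}. h m (p m))"
    by (rule prod.cong) auto
  ultimately show ?thesis by simp
qed


lemma aux_field: "(p::real) \<noteq> 0 \<Longrightarrow> s * (-c * (F / (f * D)) * (t * S)) = - p * (c * (F / (p * f * D)) * (s * t * S))"
  by (simp add: field_simps)

lemma T_step:
  fixes s :: "nat \<Rightarrow> real"
  assumes i: "i \<in> {1..K}" and pi: "p i \<ge> 1"
  shows "s i * TT s K (p(i := p i - 1)) =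
    - real (p i) * ((-1) ^ (\<Sum>m=1..K. p m) * (fact ((\<Sum>m=1..K. p m) - 1) / (\<Prod>m=1..K. fact (p m)))
        * (\<Prod>m=1..K. s m ^ p m))"
proof -
  let ?q = "p(i := p i - 1)"
  let ?R = "\<Sum>m\<in>{1..K}-{i}. p m"
  obtain j where pj: "p i = Suc j" using pi by (cases "p i") auto
  have fin: "finite {1..K}" by simp
  have sp: "(\<Sum>m=1..K. p m) = p i + ?R" using sum.remove[OF fin i, of p] by simp
  have sq: "(\<Sum>m=1..K. ?q m) = (p i - 1) + ?R" using sum_upd[OF fin i, of "\<lambda>_ x. x" p "p i - 1"] by simp
  define n where "n = (\<Sum>m=1..K. p m)"
  obtain n' where nn: "n = Suc n'" using sp pj n_def by simp
  have n1': "(\<Sum>m=1..K. ?q m) = n'" using sp sq pj nn n_def by simp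
  let ?D' = "\<Prod>m\<in>{1..K}-{i}. (fact (p m) :: real)"
  have dp: "(\<Prod>m=1..K. (fact (p m) :: real)) = fact (p i) * ?D'"
    using prod.remove[OF fin i, of "\<lambda>m. fact (p m) :: real"] by simp
  have dq: "(\<Prod>m=1..K. (fact (?q m) :: real)) = fact j * ?D'"
    using prod_upd[OF fin i, of "\<lambda>_ x. fact x :: real" p "p i - 1"] pj by simp
  have fpi: "(fact (p i) :: real) = real (p i) * fact j"
    using pj by simp
  let ?S' = "\<Prod>m\<in>{1..K}-{i}. s m ^ p m"
  have ssp: "(\<Prod>m=1..K. s m ^ p m) = s i ^ p i * ?S'"
    using prod.remove[OF fin i, of "\<lambda>m. s m ^ p m"] by simp
  have ssq: "(\<Prod>m=1..K. s m ^ ?q m) = s i ^ j * ?S'"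
    using prod_upd[OF fin i, of "\<lambda>m x. s m ^ x" p "p i - 1"] pj by simp
  have spow: "s i ^ p i = s i * s i ^ j" using pj by simp
  have sgn: "((-1::real) ^ n') = - ((-1) ^ n)" using nn by simp
  have pi0: "real (p i) \<noteq> 0" using pi by simp
  have "s i * TT s K ?q = s i * ((-1) ^ n' * (fact n' / (fact j * ?D')) * (s i ^ j * ?S'))"
    unfolding TT_def n1' dq ssq ..
  also have "\<dots> = s i * (- ((-1) ^ n) * (fact n' / (fact j * ?D')) * (s i ^ j * ?S'))"
    unfolding sgn ..
  also have "\<dots> = - real (p i) * ((-1) ^ n * (fact n' / (real (p i) * fact j * ?D')) * (s i * s i ^ j * ?S'))"
    by (rule aux_field[OF pi0])
  also have "\<dots> = - real (p i) * ((-1) ^ (\<Sum>m=1..K. p m) * (fact ((\<Sum>m=1..K. p m) - 1) / (\<Prod>m=1..K. fact (p m)))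
        * (\<Prod>m=1..K. s m ^ p m))"
    unfolding n_def[symmetric] dp fpi ssp spow using nn by (simp add: mult.assoc)
  finally show ?thesis .
qed

lemma T_split:
  fixes s :: "nat \<Rightarrow> real"
  assumes n: "(\<Sum>m=1..K. p m) \<ge> 1"
  shows "TT s K p = - (\<Sum>i\<in>{1..K}. if p i \<ge> 1 then s i * TT s K (p(i := p i - 1)) else 0)"
proof -
  define n where "n = (\<Sum>m=1..K. p m)"
  have "Suc 0 \<le> n" using n n_def by simp
  then obtain n' where nn: "n = Suc n'" using Suc_le_D by blast
  define D where "D = (\<Prod>m=1..K. fact (p m) :: real)"
  define S where "S = (\<Prod>m=1..K. s m ^ p m :: real)"
  define X where "X = (-1) ^ n * (fact n' / D) * S"
  have "(\<Sum>i\<in>{1..K}. if p i \<ge> 1 then s i * TT s K (p(i := p i - 1)) else 0)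
      = (\<Sum>i\<in>{1..K}. - real (p i) * X)"
  proof (rule sum.cong[OF refl])
    fix i assume i: "i \<in> {1..K}"
    show "(if p i \<ge> 1 then s i * TT s K (p(i := p i - 1)) else 0) = - real (p i) * X"
      using T_step[OF i, of p s] unfolding X_def D_def S_def n_def[symmetric] nn by auto
  qed
  also have "\<dots> = - real n * X" unfolding n_def by (simp add: sum_distrib_right sum_negf)
  also have "\<dots> = - TT s K p"
    unfolding X_def TT_def n_def[symmetric] D_def[symmetric] S_def[symmetric] nn
    by (simp add: field_simps)
  finally show ?thesis by simp
qed


lemma ext_upd: "p \<in> extensional A \<Longrightarrow> i \<in> A \<Longrightarrow> p(i := v) \<in> extensional A"
  unfolding extensional_def by auto

lemma B_shift:
  fixes s :: "nat \<Rightarrow> real"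
  assumes i: "i \<in> {1..K}"
  shows "(\<Sum>p\<in>PP K r. if p i \<ge> 1 then s i * TT s K (p(i := p i - 1)) else 0)
     = (if i \<le> r then s i * BB s K (r - i) else 0)"
proof -
  have fin: "finite {1..K}" by simp
  define R where "R p = (\<Sum>m\<in>{1..K}-{i}. m * p m)" for p :: "nat \<Rightarrow> nat"
  have Wp: "(\<Sum>m=1..K. m * p m) = i * p i + R p" for p
    using sum.remove[OF fin i, of "\<lambda>m. m * p m"] unfolding R_def by simp
  have Wu: "(\<Sum>m=1..K. m * (p(i:=v)) m) = i * v + R p" for p v
    using sum_upd[OF fin i, of "\<lambda>m x. m * x" p v] unfolding R_def by simp
  have "(\<Sum>p\<in>PP K r. if p i \<ge> 1 then s i * TT s K (p(i := p i - 1)) else 0)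
      = (\<Sum>p\<in>{p\<in>PP K r. p i \<ge> 1}. s i * TT s K (p(i := p i - 1)))"
    by (rule sum.inter_filter[symmetric]) (rule finite_PP)
  also have "\<dots> = (if i \<le> r then s i * BB s K (r - i) else 0)"
  proof (cases "i \<le> r")
    case True
    have "(\<Sum>p\<in>{p\<in>PP K r. p i \<ge> 1}. s i * TT s K (p(i := p i - 1))) = (\<Sum>q\<in>PP K (r - i). s i * TT s K q)"
    proof (rule sum.reindex_bij_witness[of _ "\<lambda>q. q(i := Suc (q i))" "\<lambda>p. p(i := p i - 1)"])
      fix a assume a: "a \<in> {p\<in>PP K r. p i \<ge> 1}"
      then show "(a(i := a i - 1))(i := Suc ((a(i := a i - 1)) i)) = a" by auto
      have "a \<in> extensional {1..K}" "i * a i + R a = r" "a i \<ge> 1" using a Wp[of a] unfolding PP_def by auto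
      moreover have "i * (a i - 1) = i * a i - i" by (simp add: diff_mult_distrib2)
      moreover have "i \<le> i * a i" using \<open>a i \<ge> 1\<close> by simp
      ultimately show "a(i := a i - 1) \<in> PP K (r - i)" unfolding PP_def using Wu[of a "a i - 1"] ext_upd[of a "{1..K}" i "a i - 1"] i
        by auto
      show "s i * TT s K (a(i := a i - 1)) = s i * TT s K (a(i := a i - 1))" ..
    next
      fix b assume b: "b \<in> PP K (r - i)"
      show "(b(i := Suc (b i)))(i := (b(i := Suc (b i))) i - 1) = b" by auto
      have "b \<in> extensional {1..K}" "i * b i + R b = r - i" using b Wp[of b] unfolding PP_def by auto
      then show "b(i := Suc (b i)) \<in> {p\<in>PP K r. p i \<ge> 1}" unfolding PP_def using Wu[of b "Suc (b i)"] ext_upd[of b "{1..K}" i "Suc (b i)"] i True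
        by auto
    qed
    then show ?thesis using True by (simp add: BB_def sum_distrib_left)
  next
    case False
    have E: "{p\<in>PP K r. p i \<ge> 1} = {}"
    proof (rule ccontr)
      assume "{p\<in>PP K r. p i \<ge> 1} \<noteq> {}"
      then obtain p where p: "p \<in> PP K r" "p i \<ge> 1" by blast
      then have "i * p i + R p = r" using Wp[of p] unfolding PP_def by simp
      moreover have "i \<le> i * p i" using p(2) by simp
      ultimately show False using False by simp
    qed
    show ?thesis unfolding E using False by simp
  qed
  finally show ?thesis .
qed

lemma B_rec:
  fixes s :: "nat \<Rightarrow> real"
  assumes r: "r \<ge> 1"
  shows "BB s K r = - (\<Sum>i=1..K. if i \<le> r then s i * BB s K (r - i) else 0)"
proof -
  have "BB s K r = (\<Sum>p\<in>PP K r. - (\<Sum>i\<in>{1..K}. if p i \<ge> 1 then s i * TT s K (p(i := p i - 1)) else 0))"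
    unfolding BB_def
  proof (rule sum.cong[OF refl])
    fix p assume p: "p \<in> PP K r"
    have "(\<Sum>m=1..K. p m) \<ge> 1"
    proof (rule ccontr)
      assume "\<not> (\<Sum>m=1..K. p m) \<ge> 1"
      then have "(\<Sum>m=1..K. p m) = 0" by linarith
      then have "\<forall>m\<in>{1..K}. p m = 0" using sum_eq_0_iff[of "{1..K}" p] by simp
      then have "(\<Sum>m=1..K. m * p m) = 0" by simp
      then show False using p r unfolding PP_def by simp
    qed
    then show "TT s K p = - (\<Sum>i\<in>{1..K}. if p i \<ge> 1 then s i * TT s K (p(i := p i - 1)) else 0)"
      by (rule T_split)
  qed
  also have "\<dots> = - (\<Sum>i\<in>{1..K}. \<Sum>p\<in>PP K r. if p i \<ge> 1 then s i * TT s K (p(i := p i - 1)) else 0)"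
    by (simp add: sum_negf sum.swap[of _ "PP K r"])
  also have "\<dots> = - (\<Sum>i=1..K. if i \<le> r then s i * BB s K (r - i) else 0)"
    using B_shift by simp
  finally show ?thesis .
qed

lemma B0: "BB s K 0 = 1"
proof -
  define p0 where "p0 = restrict (\<lambda>_. 0::nat) {1..K}"
  have p0z: "\<forall>m\<in>{1..K}. p0 m = 0" unfolding p0_def by simp
  have "PP K 0 = {p0}"
  proof
    show "PP K 0 \<subseteq> {p0}"
    proof
      fix p assume p: "p \<in> PP K 0"
      then have "\<forall>m\<in>{1..K}. m * p m = 0" unfolding PP_def by simp
      then have "\<forall>m\<in>{1..K}. p m = 0" by auto
      then have "p = p0" using p unfolding PP_def p0_def
        by (intro extensionalityI[of p "{1..K}"]) auto
      then show "p \<in> {p0}" by simp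
    qed
    have "(\<Sum>m=1..K. m * p0 m) = 0" using p0z by simp
    then show "{p0} \<subseteq> PP K 0" unfolding PP_def p0_def by auto
  qed
  moreover have "TT s K p0 = 1" unfolding TT_def using p0z by simp
  ultimately show ?thesis unfolding BB_def by simp
qed

lemma B_stable:
  fixes s :: "nat \<Rightarrow> real"
  shows "K \<ge> r \<Longrightarrow> BB s K r = BB s r r"
proof (induction r arbitrary: K rule: less_induct)
  case (less r)
  show ?case
  proof (cases "r = 0")
    case True then show ?thesis by (simp add: B0)
  next
    case False
    then have r1: "r \<ge> 1" by simp
    have red: "(\<Sum>i=1..K'. if i \<le> r then s i * BB s K' (r - i) else 0)
        = (\<Sum>i=1..r. s i * BB s (r - i) (r - i))" if K': "K' \<ge> r" for K'
    proof -
      have "(\<Sum>i=1..K'. if i \<le> r then s i * BB s K' (r - i) else 0)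
          = (\<Sum>i\<in>{i\<in>{1..K'}. i \<le> r}. s i * BB s K' (r - i))"
        by (rule sum.inter_filter[symmetric]) simp
      also have "{i\<in>{1..K'}. i \<le> r} = {1..r}" using K' by auto
      also have "(\<Sum>i=1..r. s i * BB s K' (r - i)) = (\<Sum>i=1..r. s i * BB s (r - i) (r - i))"
      proof (rule sum.cong[OF refl])
        fix i assume "i \<in> {1..r}"
        then have "r - i < r" "K' \<ge> r - i" using K' by auto
        then show "s i * BB s K' (r - i) = s i * BB s (r - i) (r - i)" using less.IH[of "r - i" K'] by simp
      qed
      finally show ?thesis .
    qed
    show ?thesis using B_rec[OF r1, of s K] B_rec[OF r1, of s r] red[OF less.prems] red[of r] by simp
  qed
qed

lemma alpha_rec:
  assumes "m \<ge> 1"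
  shows "alpha w m = - (\<Sum>i=1..m. sigma w i * alpha w (m - i))"
proof -
  have "alpha w m = - (\<Sum>i=1..m. if i \<le> m then sigma w i * BB (sigma w) m (m - i) else 0)"
    using alpha_BB[of w m] B_rec[OF assms, of "sigma w" m] by simp
  also have "(\<Sum>i=1..m. if i \<le> m then sigma w i * BB (sigma w) m (m - i) else 0)
     = (\<Sum>i=1..m. sigma w i * alpha w (m - i))"
  proof (rule sum.cong[OF refl])
    fix i assume "i \<in> {1..m}"
    then show "(if i \<le> m then sigma w i * BB (sigma w) m (m - i) else 0) = sigma w i * alpha w (m - i)"
      using B_stable[where K=m and r="m - i" and s="sigma w"] alpha_BB[of w "m - i"] by simp
  qed
  finally show ?thesis .
qed


lemma alpha_conv:
  "(\<Sum>k=0..m. alpha w k * sigma w (Suc m - k)) = - alpha w (Suc m)"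
proof -
  have "(\<Sum>k=0..m. alpha w k * sigma w (Suc m - k)) = (\<Sum>i=1..Suc m. sigma w i * alpha w (Suc m - i))"
    by (rule sum.reindex_bij_witness[of _ "\<lambda>i. Suc m - i" "\<lambda>k. Suc m - k"]) auto
  then show ?thesis using alpha_rec[of "Suc m" w] by simp
qed

lemma alpha0: "alpha w 0 = 1" by (simp add: alpha_def)

lemma matpow_comm: "matpow A m ** A = A ** matpow A m"
proof (induction m)
  case 0 then show ?case by simp
next
  case (Suc m)
  have "matpow A (Suc m) ** A = (matpow A m ** A) ** A" by simp
  also have "\<dots> = (A ** matpow A m) ** A" using Suc.IH by simp
  also have "\<dots> = A ** (matpow A m ** A)" by (simp add: matrix_mul_assoc)
  also have "\<dots> = A ** matpow A (Suc m)" by simp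
  finally show ?case .
qed

lemma matrix_mul_sum:
  fixes A :: "real^'n^'n"
  shows "A ** sum f S = sum (\<lambda>k. A ** f k) S"
  by (induction S rule: infinite_finite_induct) (simp_all add: matrix_add_ldistrib)

lemma matrix_neg_mul:
  fixes A B :: "real^'n^'n"
  shows "(- A) ** B = - (A ** B)"
  by (simp add: matrix_matrix_mult_def vec_eq_iff sum_negf)

lemma matrix_mul_scale:
  fixes A B :: "real^'n^'n"
  shows "A ** (c *\<^sub>R B) = c *\<^sub>R (A ** B)"
  by (simp add: matrix_scalar_ac scalar_matrix_assoc)

theorem proposition8:
  fixes w :: "'n::finite \<Rightarrow> 'n \<Rightarrow> real"
  assumes "CARD('n) > 1"
    and "\<forall>i. w i i = 0"
    and "\<forall>i j. w i j \<ge> 0"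
  shows "\<forall>m. matpow (- laplacian w) m = (\<Sum>k=0..m. alpha w k *\<^sub>R Qmat w (m - k))"
proof
  fix m
  let ?M = "- laplacian w"
  have MQ: "?M ** Qmat w j = Qmat w (Suc j) - sigma w (Suc j) *\<^sub>R mat 1" for j
    using Q_rec[OF assms(2,3), of j] by (simp add: matrix_neg_mul)
  show "matpow ?M m = (\<Sum>k=0..m. alpha w k *\<^sub>R Qmat w (m - k))"
  proof (induction m)
    case 0 then show ?case by (simp add: alpha0 Q0)
  next
    case (Suc m)
    have "matpow ?M (Suc m) = ?M ** matpow ?M m" using matpow_comm[of ?M m] by simp
    also have "\<dots> = (\<Sum>k=0..m. alpha w k *\<^sub>R (?M ** Qmat w (m - k)))"
      unfolding Suc.IH by (simp add: matrix_mul_sum matrix_mul_scale)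
    also have "\<dots> = (\<Sum>k=0..m. alpha w k *\<^sub>R Qmat w (Suc m - k)
          - (alpha w k * sigma w (Suc m - k)) *\<^sub>R mat 1)"
    proof (rule sum.cong[OF refl])
      fix k assume "k \<in> {0..m}"
      then have "Suc (m - k) = Suc m - k" by auto
      then show "alpha w k *\<^sub>R (?M ** Qmat w (m - k)) = alpha w k *\<^sub>R Qmat w (Suc m - k)
          - (alpha w k * sigma w (Suc m - k)) *\<^sub>R mat 1"
        unfolding MQ by (simp add: scaleR_diff_right)
    qed
    also have "\<dots> = (\<Sum>k=0..m. alpha w k *\<^sub>R Qmat w (Suc m - k))
          - (\<Sum>k=0..m. alpha w k * sigma w (Suc m - k)) *\<^sub>R mat 1"
      by (simp add: sum_subtractf scaleR_sum_left)
    also have "\<dots> = (\<Sum>k=0..m. alpha w k *\<^sub>R Qmat w (Suc m - k)) + alpha w (Suc m) *\<^sub>R Qmat w (Suc m - Suc m)"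
      unfolding alpha_conv by (simp add: Q0)
    also have "\<dots> = (\<Sum>k=0..Suc m. alpha w k *\<^sub>R Qmat w (Suc m - k))"
      by (rule sum.atLeast0_atMost_Suc[symmetric])
    finally show ?case .
  qed
qed

end
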